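(* Let $L$ be a finite multiset of positive integers. If $L$ admits a special linear realization of type $1$, then for every positive integer $b$ the multiset $L\cup\{2^b\}$ also admits a special linear realization of type $1$.
   Context: For a multiset $L$ of positive integers with $|L|=v-1$, each at most $v-1$, a linear realization of $L$ is a Hamiltonian path $[x_0,x_1,\dots,x_{v-1}]$ of the complete graph on $\{0,1,\dots,v-1\}$ such that the multiset $\{|x_i-x_{i+1}| : i=0,\dots,v-2\}$ equals $L$. A linear realization of $L$ is special of type $1$ if the vertices $|L|$ and $|L|-1$ are adjacent (consecutive) in the path. $\{2^b\}$ denotes the multiset of $b$ copies of $2$, and $\cup$ is multiset union. *)

theory Defs
  imports Main "HOL-Library.Multiset"
begin

definition path_diffs :: "nat list \<Rightarrow> nat multiset" where
  "path_diffs xs = mset (map (\<lambda>i. nat \<bar>int (xs ! i) - int (xs ! Suc i)\<bar>) [0..<length xs - 1])"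

text \<open>A linear realization of L: a Hamiltonian path [x_0,...,x_{v-1}] of K_v on {0..v-1},
  where v = |L| + 1, whose multiset of edge lengths equals L.\<close>
definition linear_realization :: "nat multiset \<Rightarrow> nat list \<Rightarrow> bool" where
  "linear_realization L xs \<longleftrightarrow>
     length xs = size L + 1 \<and> distinct xs \<and> set xs = {0..<size L + 1} \<and> path_diffs xs = L"

definition special_type1 :: "nat multiset \<Rightarrow> nat list \<Rightarrow> bool" where
  "special_type1 L xs \<longleftrightarrow> linear_realization L xs \<and>
     (\<exists>i. Suc i < length xs \<and>
        {xs ! i, xs ! Suc i} = {size L, size L - 1})"

end

theory Submission
  imports Defs
begin

fun pd :: "nat list \<Rightarrow> nat multiset" where
 "pd (x#y#zs) = add_mset (nat \<bar>int x - int y\<bar>) (pd (y#zs))" | "pd _ = {#}"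

lemma pd_eq: "path_diffs xs = pd xs"
proof (induction xs rule: pd.induct)
  case (1 x y zs)
  have "[0..<length (x#y#zs) - 1] = 0 # map Suc [0..<length (y#zs) - 1]"
    by (simp add: upt_conv_Cons map_Suc_upt del: upt_Suc)
  then show ?case using 1 unfolding path_diffs_def by (simp add: comp_def)
qed (auto simp: path_diffs_def)

lemma pd_app: "pd (as @ x # ws) = pd (as @ [x]) + pd (x # ws)"
  by (induction as rule: pd.induct) auto

lemma step:
  assumes "special_type1 L xs"
  shows "\<exists>ys. special_type1 (add_mset 2 L) ys"
proof -
  let ?n = "size L"
  have lr: "length xs = ?n + 1" "distinct xs" "set xs = {0..<?n + 1}" "pd xs = L"
    using assms unfolding special_type1_def linear_realization_def pd_eq by auto
  obtain i where i: "Suc i < length xs" "{xs ! i, xs ! Suc i} = {?n, ?n - 1}"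
    using assms unfolding special_type1_def by auto
  define x where "x = xs ! i"
  define y where "y = xs ! Suc i"
  define as where "as = take i xs"
  define cs where "cs = drop (Suc (Suc i)) xs"
  have xs: "xs = as @ x # y # cs"
    unfolding as_def cs_def x_def y_def using i(1)
    by (metis Cons_nth_drop_Suc Suc_lessD append_take_drop_id)
  have xy: "x \<noteq> y" using lr(2) xs by auto
  have n1: "?n \<ge> 1" using i(2) xy x_def y_def by (auto simp: doubleton_eq_iff)
  have xyc: "(x = ?n \<and> y = ?n - 1) \<or> (x = ?n - 1 \<and> y = ?n)"
    using i(2) x_def y_def by (auto simp: doubleton_eq_iff)
  define ys where "ys = as @ x # Suc ?n # y # cs"
  have notin: "Suc ?n \<notin> set xs" using lr(3) by auto
  have "linear_realization (add_mset 2 L) ys"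
    unfolding linear_realization_def pd_eq
  proof (intro conjI)
    show "length ys = size (add_mset 2 L) + 1" using lr(1) xs ys_def by simp
    show "distinct ys" using lr(2) notin unfolding xs ys_def by auto
    have "set ys = insert (Suc ?n) (set xs)" unfolding xs ys_def by auto
    then show "set ys = {0..<size (add_mset 2 L) + 1}" using lr(3) by auto
    have "pd ys = pd (as @ [x]) + pd (x # Suc ?n # y # cs)" unfolding ys_def by (rule pd_app)
    also have "\<dots> = pd (as @ [x]) + add_mset (nat \<bar>int x - int (Suc ?n)\<bar>)
        (add_mset (nat \<bar>int (Suc ?n) - int y\<bar>) (pd (y # cs)))" by simp
    also have "\<dots> = add_mset 2 (pd (as @ [x]) + add_mset (nat \<bar>int x - int y\<bar>) (pd (y # cs)))"
    proof -
      have "{#nat \<bar>int x - int (Suc ?n)\<bar>, nat \<bar>int (Suc ?n) - int y\<bar>#} = {#2, nat \<bar>int x - int y\<bar>#}"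
        using xyc n1 by (elim disjE) (simp_all add: of_nat_diff add_mset_commute)
      moreover have "\<And>A P a b. A + add_mset a (add_mset b P) = A + {#a, b#} + P" by simp
      moreover have "\<And>A P c. add_mset 2 (A + add_mset c P) = A + {#2, c#} + P" by simp
      ultimately show ?thesis by metis
    qed
    also have "\<dots> = add_mset 2 (pd xs)" unfolding xs by (subst pd_app[of as x]) simp
    finally show "pd ys = add_mset 2 L" using lr(4) by simp
  qed
  moreover have "\<exists>j. Suc j < length ys \<and> {ys ! j, ys ! Suc j} = {size (add_mset 2 L), size (add_mset 2 L) - 1}"
  proof (cases "x = ?n")
    case True
    then show ?thesis unfolding ys_def
      by (intro exI[of _ "length as"]) (auto simp: nth_append)
  next
    case False
    then have "y = ?n" using xyc by auto
    then show ?thesis unfolding ys_def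
      by (intro exI[of _ "Suc (length as)"]) (auto simp: nth_append)
  qed
  ultimately show ?thesis unfolding special_type1_def by blast
qed

theorem lemma2p2:
  fixes L :: "nat multiset" and b :: nat
  assumes "\<forall>x\<in>#L. 0 < x"
    and "\<exists>xs. special_type1 L xs"
    and "0 < b"
  shows "\<exists>ys. special_type1 (L + replicate_mset b 2) ys"
proof -
  have "\<exists>ys. special_type1 (L + replicate_mset k 2) ys" for k
  proof (induction k)
    case 0 then show ?case using assms(2) by simp
  next
    case (Suc k)
    then obtain ys where "special_type1 (L + replicate_mset k 2) ys" by blast
    from step[OF this] show ?case by simp
  qed
  then show ?thesis by blast
qed

end
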